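(* Let $n\ge1$ be an integer, $0<\alpha\le1$ and $\frac n{n+1}<\beta<\frac{n+\alpha}{n+1}$. Let $E=\{(u_1,\dots,u_n)\in\mathbb{R}^n:|u_i|\le1,\ i=1,\dots,n\}$. Then for each $i=1,\dots,n$ $$B_i:=\int_E\frac{|u_i|^\alpha}{|u_1\cdots u_n(u_1+\dots+u_n)|^\beta}\,du_1\cdots du_n<\infty.$$ *)

theory Defs
  imports "HOL-Analysis.Analysis"
begin

end

theory Submission
  imports Defs
begin


lemma core:
  fixes x :: "'n::finite \<Rightarrow> real" and a M N \<alpha> \<beta> :: real
  assumes xpos: "\<And>j. 0 < x j" and xle: "\<And>j. x j \<le> M" and a0: "0 \<le> a" and aM: "a \<le> M"
    and MN: "M \<le> N" and N1: "1 \<le> N" and Nc: "N = real CARD('n)"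
    and al: "0 < \<alpha>" "\<alpha> \<le> 1" and be: "0 < \<beta>"
  shows "a powr \<alpha> / (M * prod x UNIV) powr \<beta>
     \<le> N * (\<Prod>j\<in>UNIV. x j powr (-(\<beta> + max 0 (\<beta>-\<alpha>) / N)))"
proof -
  define \<gamma> where "\<gamma> = max 0 (\<beta>-\<alpha>)"
  obtain j0 :: 'n where True by simp
  have M0: "0 < M" using xpos[of j0] xle[of j0] by linarith
  define X where "X = (\<Prod>j\<in>UNIV. x j powr \<beta>)"
  have X0: "0 < X" unfolding X_def using xpos by (intro prod_pos) (metis less_irrefl powr_gt_zero)
  have P: "(\<Prod>j\<in>UNIV. x j powr (-(\<beta> + \<gamma> / N))) = (\<Prod>j\<in>UNIV. x j powr (-\<beta>)) * (\<Prod>j\<in>UNIV. x j powr (-(\<gamma>/N)))"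
    by (simp add: prod.distrib[symmetric] powr_add[symmetric])
  have P2: "(\<Prod>j\<in>UNIV. x j powr (-\<beta>)) = 1 / X"
    unfolding X_def by (simp add: powr_minus_divide prod_dividef)
  have Q: "(\<Prod>j\<in>UNIV. x j powr (-(\<gamma>/N))) \<ge> (\<Prod>j\<in>(UNIV::'n set). M powr (-(\<gamma>/N)))"
    apply (rule prod_mono)
    using xpos xle N1 by (auto intro!: powr_mono2' simp: \<gamma>_def)
  have Q2: "(\<Prod>j\<in>(UNIV::'n set). M powr (-(\<gamma>/N))) = M powr (-\<gamma>)"
    using M0 N1 Nc by (simp add: powr_power)
  have R: "(M * prod x UNIV) powr \<beta> = M powr \<beta> * X"
    unfolding X_def using M0 xpos by (simp add: powr_mult prod_powr_distrib)
  have A: "a powr \<alpha> \<le> M powr \<alpha>" using a0 aM al by (intro powr_mono2) auto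
  define \<delta> where "\<delta> = \<alpha> + \<gamma> - \<beta>"
  have d0: "0 \<le> \<delta>" "\<delta> \<le> 1" using al be unfolding \<delta>_def \<gamma>_def by auto
  have D: "M powr \<delta> \<le> N"
  proof -
    have "M powr \<delta> \<le> N powr \<delta>" using d0 M0 MN by (intro powr_mono2) auto
    also have "\<dots> \<le> N powr 1" using d0 N1 by (intro powr_mono) auto
    finally show ?thesis using N1 by simp
  qed
  have key: "a powr \<alpha> \<le> N * M powr (-\<gamma>) * M powr \<beta>"
  proof -
    have "M powr \<alpha> = M powr \<delta> * M powr (-\<gamma>) * M powr \<beta>"
      by (simp add: \<delta>_def powr_add[symmetric])
    also have "\<dots> \<le> N * M powr (-\<gamma>) * M powr \<beta>"
      using D by (intro mult_right_mono) auto
    finally show ?thesis using A by linarith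
  qed
  have "a powr \<alpha> / (M * prod x UNIV) powr \<beta> = a powr \<alpha> / (M powr \<beta> * X)" using R by simp
  also have "\<dots> \<le> N * M powr (-\<gamma>) * M powr \<beta> / (M powr \<beta> * X)"
    using key X0 M0 by (intro divide_right_mono) auto
  also have "\<dots> = N * ((1/X) * M powr (-\<gamma>))" using M0 X0 by simp
  also have "\<dots> \<le> N * ((\<Prod>j\<in>UNIV. x j powr (-\<beta>)) * (\<Prod>j\<in>UNIV. x j powr (-(\<gamma>/N))))"
    using Q Q2 P2 X0 N1 by (auto intro!: mult_left_mono divide_right_mono)
  finally show ?thesis using P by (simp add: \<gamma>_def)
qed




definition sh :: "'n::finite \<Rightarrow> real^'n \<Rightarrow> real^'n" where
  "sh k u = u - (u$k + (\<Sum>i\<in>UNIV. u$i)) *\<^sub>R axis k 1"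

lemma sh_nth: "sh k u $ j = (if j = k then - (\<Sum>i\<in>UNIV. u$i) else u$j)"
  by (simp add: sh_def axis_def)

lemma sh_meas: "sh k \<in> borel_measurable borel"
  unfolding sh_def by (intro borel_measurable_continuous_onI continuous_intros)

lemma iota_nth:
  fixes g :: "real^'n::finite \<Rightarrow> real"
  shows "(\<Sum>b\<in>Basis. g b *\<^sub>R b) $ j = g (axis j 1)"
proof -
  have "(\<Sum>b\<in>Basis. g b *\<^sub>R b) $ j = (\<Sum>b\<in>Basis. g b *\<^sub>R b) \<bullet> axis j 1"
    by (rule cart_eq_inner_axis)
  also have "\<dots> = (\<Sum>b\<in>Basis. g b * (b \<bullet> axis j 1))"
    by (simp add: inner_sum_left)
  also have "\<dots> = g (axis j 1)"
    by (simp add: inner_Basis if_distrib cong: if_cong)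
  finally show ?thesis .
qed



lemma sh_inv:
  fixes F :: "real^'n::finite \<Rightarrow> ennreal"
  assumes Fm[measurable]: "F \<in> borel_measurable borel"
  shows "(\<integral>\<^sup>+u. F (sh k u) \<partial>lborel) = (\<integral>\<^sup>+u. F u \<partial>lborel)"
proof -
  define \<iota> where "\<iota> = (\<lambda>f::real^'n \<Rightarrow> real. \<Sum>b\<in>Basis. f b *\<^sub>R b)"
  interpret P: product_sigma_finite "\<lambda>_::real^'n. (lborel::real measure)"
    by (simp add: product_sigma_finite_def sigma_finite_lborel)
  have L: "(lborel::(real^'n) measure) = distr (\<Pi>\<^sub>M b\<in>Basis. lborel) borel \<iota>"
    unfolding \<iota>_def by (rule lborel_eq)
  have \<iota>m[measurable]: "\<iota> \<in> measurable (\<Pi>\<^sub>M b\<in>Basis. (lborel::real measure)) borel"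
    unfolding \<iota>_def by measurable
  note shm[measurable] = sh_meas[of k]
  define bk where "bk = (axis k 1 :: real^'n)"
  define I where "I = (Basis::(real^'n) set) - {bk}"
  have BI: "(Basis::(real^'n) set) = insert bk I" "bk \<notin> I" "finite I"
    unfolding I_def bk_def by auto
  have int: "(\<integral>\<^sup>+u. G u \<partial>lborel) = (\<integral>\<^sup>+x. (\<integral>\<^sup>+y. G (\<iota> (x(bk := y))) \<partial>lborel) \<partial>(\<Pi>\<^sub>M b\<in>I. lborel))"
    if Gm[measurable]: "G \<in> borel_measurable borel" for G :: "real^'n \<Rightarrow> ennreal"
  proof -
    have "(\<integral>\<^sup>+u. G u \<partial>lborel) = (\<integral>\<^sup>+f. G (\<iota> f) \<partial>(\<Pi>\<^sub>M b\<in>Basis. lborel))"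
      by (subst L) (simp add: nn_integral_distr)
    also have "\<dots> = (\<integral>\<^sup>+f. G (\<iota> f) \<partial>(\<Pi>\<^sub>M b\<in>insert bk I. lborel))"
      using BI by simp
    also have "\<dots> = (\<integral>\<^sup>+x. (\<integral>\<^sup>+y. G (\<iota> (x(bk := y))) \<partial>lborel) \<partial>(\<Pi>\<^sub>M b\<in>I. lborel))"
      proof (rule P.product_nn_integral_insert)
      have "(\<lambda>f. G (\<iota> f)) \<in> borel_measurable (\<Pi>\<^sub>M b\<in>Basis. (lborel::real measure))" by measurable
      then show "(\<lambda>f. G (\<iota> f)) \<in> borel_measurable (\<Pi>\<^sub>M b\<in>insert bk I. (lborel::real measure))"
        by (simp only: BI(1))
    qed (use BI in auto)
    finally show ?thesis .
  qed
  have cx: "\<iota> (x(bk := y)) = (\<chi> j. if j = k then 0 else x (axis j 1)) + y *\<^sub>R axis k 1" for x y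
    by (simp only: vec_eq_iff \<iota>_def iota_nth) (auto simp add: bk_def axis_eq_axis axis_def fun_eq_iff)
  have inner: "(\<integral>\<^sup>+y. F (sh k (\<iota> (x(bk := y)))) \<partial>lborel) = (\<integral>\<^sup>+y. F (\<iota> (x(bk := y))) \<partial>lborel)" for x
  proof -
    define t where "t = (\<Sum>i\<in>UNIV-{k}. x (axis i 1))"
    define v0 where "v0 = (\<chi> j. if j = k then 0 else x (axis j 1))"
    have sum_split: "(\<Sum>i\<in>UNIV. (v0 + y *\<^sub>R axis k 1) $ i) = y + t" for y
    proof -
      have "(\<Sum>i\<in>UNIV. (v0 + y *\<^sub>R axis k 1) $ i) = (v0 + y *\<^sub>R axis k 1) $ k + (\<Sum>i\<in>UNIV-{k}. (v0 + y *\<^sub>R axis k 1) $ i)"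
        by (rule sum.remove) simp_all
      also have "\<dots> = y + t" unfolding t_def v0_def by (auto simp: axis_def intro!: sum.cong)
      finally show ?thesis .
    qed
    have eq: "sh k (v0 + y *\<^sub>R axis k 1) = v0 + (-t + -1 * y) *\<^sub>R axis k 1" for y
      by (simp only: vec_eq_iff sh_nth sum_split) (simp add: v0_def axis_def)
    have gm[measurable]: "(\<lambda>y. F (v0 + y *\<^sub>R axis k 1)) \<in> borel_measurable borel" by measurable
    have "(\<integral>\<^sup>+y. F (\<iota> (x(bk := y))) \<partial>lborel) = (\<integral>\<^sup>+y. F (v0 + y *\<^sub>R axis k 1) \<partial>lborel)"
      by (simp add: cx v0_def)
    also have "\<dots> = ennreal \<bar>-1\<bar> * (\<integral>\<^sup>+y. F (v0 + (-t + -1 * y) *\<^sub>R axis k 1) \<partial>lborel)"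
      by (rule nn_integral_real_affine[OF gm]) simp
    also have "\<dots> = (\<integral>\<^sup>+y. F (sh k (v0 + y *\<^sub>R axis k 1)) \<partial>lborel)"
      by (simp only: eq) simp
    also have "\<dots> = (\<integral>\<^sup>+y. F (sh k (\<iota> (x(bk := y)))) \<partial>lborel)"
      by (simp add: cx v0_def)
    finally show ?thesis by simp
  qed
  have "(\<integral>\<^sup>+u. F (sh k u) \<partial>lborel) = (\<integral>\<^sup>+x. (\<integral>\<^sup>+y. F (sh k (\<iota> (x(bk := y)))) \<partial>lborel) \<partial>(\<Pi>\<^sub>M b\<in>I. lborel))"
    by (rule int) measurable
  also have "\<dots> = (\<integral>\<^sup>+x. (\<integral>\<^sup>+y. F (\<iota> (x(bk := y))) \<partial>lborel) \<partial>(\<Pi>\<^sub>M b\<in>I. lborel))"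
    by (simp add: inner)
  also have "\<dots> = (\<integral>\<^sup>+u. F u \<partial>lborel)"
    by (rule int[symmetric]) measurable
  finally show ?thesis .
qed




lemma Basis_cart_real: "(Basis :: (real^'n::finite) set) = range (\<lambda>j. axis j 1)"
  by (auto simp: Basis_vec_def)

lemma prod_int:
  fixes g :: "real \<Rightarrow> ennreal"
  assumes [measurable]: "g \<in> borel_measurable borel"
  shows "(\<integral>\<^sup>+u. (\<Prod>j\<in>UNIV. g (u$j)) \<partial>(lborel::(real^'n::finite) measure)) = (\<integral>\<^sup>+x. g x \<partial>lborel) ^ CARD('n)"
proof -
  have inj: "inj (\<lambda>j::'n. axis j (1::real))" by (auto intro!: injI simp: axis_eq_axis)
  have "(\<Prod>j\<in>UNIV. g (u$j)) = (\<Prod>b\<in>Basis. g (u \<bullet> b))" for u :: "real^'n"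
    unfolding Basis_cart_real by (simp add: prod.reindex[OF inj] cart_eq_inner_axis)
  then have "(\<integral>\<^sup>+u. (\<Prod>j\<in>UNIV. g (u$j)) \<partial>(lborel::(real^'n::finite) measure)) = (\<integral>\<^sup>+u. (\<Prod>b\<in>Basis. g (u \<bullet> b)) \<partial>(lborel::(real^'n::finite) measure))"
    by simp
  also have "\<dots> = (\<Prod>b\<in>(Basis::(real^'n) set). (\<integral>\<^sup>+x. g x \<partial>lborel))"
    by (rule nn_integral_lborel_prod) auto
  also have "\<dots> = (\<integral>\<^sup>+x. g x \<partial>lborel) ^ CARD('n)"
    by simp
  finally show ?thesis .
qed

lemma oned_finite:
  fixes e N :: real
  assumes e: "e < 1" and N: "0 \<le> N"
  shows "(\<integral>\<^sup>+z. ennreal (if \<bar>z\<bar> \<le> N then \<bar>z\<bar> powr (-e) else 0) \<partial>lborel) < \<infinity>"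
proof -
  define f where "f = (\<lambda>x::real. if x \<in> {0..N} then x powr (-e) else 0)"
  have fm[measurable]: "f \<in> borel_measurable borel" unfolding f_def by measurable
  have hi: "(f has_integral (N powr (-e+1) / (-e+1))) UNIV"
    unfolding f_def has_integral_restrict_UNIV
    by (rule has_integral_powr_from_0) (use e N in auto)
  have I: "(\<integral>\<^sup>+x. ennreal (f x) \<partial>lborel) = ennreal (N powr (-e+1) / (-e+1))"
    by (rule nn_integral_has_integral_lborel[OF fm _ hi]) (auto simp: f_def)
  have I2: "(\<integral>\<^sup>+x. ennreal (f x) \<partial>lborel) = ennreal \<bar>-1\<bar> * (\<integral>\<^sup>+x. ennreal (f (0 + -1 * x)) \<partial>lborel)"
    by (rule nn_integral_real_affine) auto
  have eq: "(\<lambda>z. ennreal (if \<bar>z\<bar> \<le> N then \<bar>z\<bar> powr (-e) else 0)) = (\<lambda>z. ennreal (f z) + ennreal (f (-z)))"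
    by (auto simp: f_def fun_eq_iff abs_if)
  have "(\<integral>\<^sup>+z. ennreal (if \<bar>z\<bar> \<le> N then \<bar>z\<bar> powr (-e) else 0) \<partial>lborel)
        = (\<integral>\<^sup>+x. ennreal (f x) \<partial>lborel) + (\<integral>\<^sup>+x. ennreal (f (-x)) \<partial>lborel)"
    unfolding eq by (rule nn_integral_add) auto
  also have "\<dots> = ennreal (N powr (-e+1) / (-e+1)) + ennreal (N powr (-e+1) / (-e+1))"
    using I I2 by simp
  finally show ?thesis by (simp add: ennreal_plus[symmetric] del: ennreal_plus)
qed




lemma pointwise:
  fixes u :: "real^'n::finite" and i :: 'n and \<alpha> \<beta> N e :: real
  assumes uE: "\<forall>j. \<bar>u $ j\<bar> \<le> 1" and Nc: "N = real CARD('n)"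
    and al: "0 < \<alpha>" "\<alpha> \<le> 1" and be: "0 < \<beta>" and ed: "e = \<beta> + max 0 (\<beta>-\<alpha>) / N"
  defines "w \<equiv> (\<lambda>z::real. if \<bar>z\<bar> \<le> N then \<bar>z\<bar> powr (-e) else 0)"
  shows "\<exists>v. (v = u \<or> (\<exists>k. v = sh k u)) \<and>
     \<bar>u $ i\<bar> powr \<alpha> / \<bar>(\<Prod>j\<in>UNIV. u $ j) * (\<Sum>j\<in>UNIV. u $ j)\<bar> powr \<beta> \<le> N * (\<Prod>j\<in>UNIV. w (v $ j))"
proof -
  define s where "s = (\<Sum>j\<in>UNIV. u $ j)"
  have N1: "1 \<le> N" using Nc by (simp add: Suc_le_eq)
  have w0: "0 \<le> w z" for z unfolding w_def by auto
  have sN: "\<bar>s\<bar> \<le> N"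
  proof -
    have "\<bar>s\<bar> \<le> (\<Sum>j\<in>UNIV. \<bar>u $ j\<bar>)" unfolding s_def by (rule sum_abs)
    also have "\<dots> \<le> (\<Sum>j\<in>(UNIV::'n set). 1)" using uE by (intro sum_mono) auto
    finally show ?thesis using Nc by simp
  qed
  show ?thesis
  proof (cases "(\<forall>j. u $ j \<noteq> 0) \<and> s \<noteq> 0")
    case False
    then have "(\<Prod>j\<in>UNIV. u $ j) * s = 0" by auto
    then have "\<bar>u $ i\<bar> powr \<alpha> / \<bar>(\<Prod>j\<in>UNIV. u $ j) * (\<Sum>j\<in>UNIV. u $ j)\<bar> powr \<beta> = 0"
      by (simp add: s_def)
    moreover have "0 \<le> N * (\<Prod>j\<in>UNIV. w (u $ j))" using w0 N1 by (intro mult_nonneg_nonneg prod_nonneg) auto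
    ultimately have "\<bar>u $ i\<bar> powr \<alpha> / \<bar>(\<Prod>j\<in>UNIV. u $ j) * (\<Sum>j\<in>UNIV. u $ j)\<bar> powr \<beta> \<le> N * (\<Prod>j\<in>UNIV. w (u $ j))"
      by linarith
    then show ?thesis by blast
  next
    case True
    then have nz: "\<And>j. u $ j \<noteq> 0" and s0: "s \<noteq> 0" by auto
    obtain k where kmax: "\<And>j. \<bar>u $ j\<bar> \<le> \<bar>u $ k\<bar>"
    proof -
      have "Max (range (\<lambda>j. \<bar>u $ j\<bar>)) \<in> range (\<lambda>j. \<bar>u $ j\<bar>)" by (rule Max_in) auto
      then obtain k where "Max (range (\<lambda>j. \<bar>u $ j\<bar>)) = \<bar>u $ k\<bar>" by (metis (no_types, lifting) imageE)
      moreover have "\<bar>u $ j\<bar> \<le> Max (range (\<lambda>j. \<bar>u $ j\<bar>))" for j by (rule Max_ge) auto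
      ultimately show ?thesis using that[of k] by simp
    qed
    show ?thesis
    proof (cases "\<bar>u $ k\<bar> \<le> \<bar>s\<bar>")
      case True
      have "\<bar>u $ i\<bar> powr \<alpha> / (\<bar>s\<bar> * prod (\<lambda>j. \<bar>u $ j\<bar>) UNIV) powr \<beta>
         \<le> N * (\<Prod>j\<in>UNIV. \<bar>u $ j\<bar> powr (-(\<beta> + max 0 (\<beta>-\<alpha>) / N)))"
        by (rule core[OF _ _ _ _ sN N1 Nc al be]) (use nz kmax True in \<open>auto intro: order_trans\<close>)
      moreover have "\<bar>(\<Prod>j\<in>UNIV. u $ j) * (\<Sum>j\<in>UNIV. u $ j)\<bar> = \<bar>s\<bar> * prod (\<lambda>j. \<bar>u $ j\<bar>) UNIV"
        by (simp add: s_def abs_mult abs_prod)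
      moreover have "(\<Prod>j\<in>UNIV. \<bar>u $ j\<bar> powr (-(\<beta> + max 0 (\<beta>-\<alpha>) / N))) = (\<Prod>j\<in>UNIV. w (u $ j))"
        unfolding w_def ed using uE N1 by (intro prod.cong) (auto intro: order_trans)
      ultimately show ?thesis by (intro exI[of _ u]) (simp add: ed)
    next
      case False
      define v where "v = sh k u"
      have vk: "v $ k = - s" and vj: "\<And>j. j \<noteq> k \<Longrightarrow> v $ j = u $ j"
        by (simp_all add: v_def sh_nth s_def)
      have Mle: "\<bar>u $ k\<bar> \<le> N" using uE[rule_format, of k] N1 by linarith
      have xpos: "0 < \<bar>v $ j\<bar>" for j using nz s0 vk vj by (cases "j = k") auto
      have xle: "\<bar>v $ j\<bar> \<le> \<bar>u $ k\<bar>" for j using kmax False vk vj by (cases "j = k") auto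
      have c: "\<bar>u $ i\<bar> powr \<alpha> / (\<bar>u $ k\<bar> * prod (\<lambda>j. \<bar>v $ j\<bar>) UNIV) powr \<beta>
         \<le> N * (\<Prod>j\<in>UNIV. \<bar>v $ j\<bar> powr (-(\<beta> + max 0 (\<beta>-\<alpha>) / N)))"
        by (rule core[OF xpos xle _ kmax Mle N1 Nc al be]) simp
      have p1: "prod (\<lambda>j. \<bar>v $ j\<bar>) UNIV = \<bar>s\<bar> * prod (\<lambda>j. \<bar>u $ j\<bar>) (UNIV - {k})"
      proof -
        have "prod (\<lambda>j. \<bar>v $ j\<bar>) UNIV = \<bar>v $ k\<bar> * prod (\<lambda>j. \<bar>v $ j\<bar>) (UNIV - {k})"
          by (rule prod.remove) simp_all
        also have "\<dots> = \<bar>s\<bar> * prod (\<lambda>j. \<bar>u $ j\<bar>) (UNIV - {k})"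
          using vk vj by (auto intro!: prod.cong)
        finally show ?thesis .
      qed
      have p2: "prod (\<lambda>j. \<bar>u $ j\<bar>) UNIV = \<bar>u $ k\<bar> * prod (\<lambda>j. \<bar>u $ j\<bar>) (UNIV - {k})"
        by (rule prod.remove) simp_all
      have "\<bar>(\<Prod>j\<in>UNIV. u $ j) * (\<Sum>j\<in>UNIV. u $ j)\<bar> = \<bar>u $ k\<bar> * prod (\<lambda>j. \<bar>v $ j\<bar>) UNIV"
        by (simp add: s_def[symmetric] abs_mult abs_prod p1 p2)
      moreover have "(\<Prod>j\<in>UNIV. \<bar>v $ j\<bar> powr (-(\<beta> + max 0 (\<beta>-\<alpha>) / N))) = (\<Prod>j\<in>UNIV. w (v $ j))"
        unfolding w_def ed using xle Mle by (intro prod.cong) (auto intro: order_trans)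
      ultimately show ?thesis using c by (intro exI[of _ v]) (auto simp: ed v_def)
    qed
  qed
qed




theorem lemma5p5:
  fixes \<alpha> \<beta> :: real and i :: "'n::finite"
  assumes "0 < \<alpha>" "\<alpha> \<le> 1"
    and "real CARD('n) / (real CARD('n) + 1) < \<beta>"
    and "\<beta> < (real CARD('n) + \<alpha>) / (real CARD('n) + 1)"
  shows "(\<integral>\<^sup>+ u. indicator {u :: real ^ 'n. \<forall>j. \<bar>u $ j\<bar> \<le> 1} u *
            ennreal (\<bar>u $ i\<bar> powr \<alpha> /
                     \<bar>(\<Prod>j\<in>UNIV. u $ j) * (\<Sum>j\<in>UNIV. u $ j)\<bar> powr \<beta>) \<partial>lborel) < \<infinity>"
proof -
  define N where "N = real CARD('n)"
  have N1: "1 \<le> N" unfolding N_def by (simp add: Suc_le_eq)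
  have b1: "N / (N + 1) < \<beta>" and b2: "\<beta> < (N + \<alpha>) / (N + 1)" using assms(3,4) by (simp_all add: N_def)
  have be: "0 < \<beta>" using b1 N1 by (smt (verit) divide_nonneg_nonneg)
  have b2': "\<beta> * (N + 1) < N + \<alpha>" using b2 N1 by (simp add: pos_less_divide_eq)
  define e where "e = \<beta> + max 0 (\<beta>-\<alpha>) / N"
  have e1: "e < 1"
  proof (cases "\<beta> \<le> \<alpha>")
    case True
    have "\<beta> * (N+1) < 1 * (N+1)" using b2' assms(2) by simp
    then have "\<beta> < 1" using N1 mult_less_cancel_right_pos[of "N+1" \<beta> 1] by linarith
    then show ?thesis using True by (simp add: e_def)
  next
    case False
    then have "e = \<beta> + (\<beta>-\<alpha>) / N" by (simp add: e_def)
    also have "\<dots> < 1"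
    proof -
      have "\<beta>*N + \<beta> < N + \<alpha>" using b2' by (simp add: algebra_simps)
      then show ?thesis using N1 by (simp add: field_simps)
    qed
    finally show ?thesis .
  qed
  define w where "w = (\<lambda>z::real. if \<bar>z\<bar> \<le> N then \<bar>z\<bar> powr (-e) else 0)"
  define P where "P = (\<lambda>u::real^'n. \<Prod>j\<in>UNIV. ennreal (w (u$j)))"
  have wm[measurable]: "(\<lambda>z. ennreal (w z)) \<in> borel_measurable borel" unfolding w_def by measurable
  have nthm[measurable]: "(\<lambda>u::real^'n. u $ j) \<in> borel_measurable borel" for j
    by (intro borel_measurable_continuous_onI continuous_intros)
  have Pm[measurable]: "P \<in> borel_measurable borel" unfolding P_def by measurable
  have W: "(\<integral>\<^sup>+z. ennreal (w z) \<partial>lborel) < \<infinity>" using oned_finite[OF e1, of N] N1 unfolding w_def by simp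
  have IP: "(\<integral>\<^sup>+u. P u \<partial>lborel) < \<infinity>"
    unfolding P_def using prod_int[OF wm, where 'n='n] W by (simp add: power_less_top_ennreal)
  have IPk: "(\<integral>\<^sup>+u. P (sh k u) \<partial>lborel) = (\<integral>\<^sup>+u. P u \<partial>lborel)" for k by (rule sh_inv[OF Pm])
  have bound: "indicator {u :: real ^ 'n. \<forall>j. \<bar>u $ j\<bar> \<le> 1} u *
            ennreal (\<bar>u $ i\<bar> powr \<alpha> / \<bar>(\<Prod>j\<in>UNIV. u $ j) * (\<Sum>j\<in>UNIV. u $ j)\<bar> powr \<beta>)
       \<le> ennreal N * (P u + (\<Sum>k\<in>UNIV. P (sh k u)))" for u
  proof (cases "\<forall>j. \<bar>u $ j\<bar> \<le> 1")
    case False then show ?thesis by simp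
  next
    case True
    obtain v where v: "v = u \<or> (\<exists>k. v = sh k u)"
      and le: "\<bar>u $ i\<bar> powr \<alpha> / \<bar>(\<Prod>j\<in>UNIV. u $ j) * (\<Sum>j\<in>UNIV. u $ j)\<bar> powr \<beta> \<le> N * (\<Prod>j\<in>UNIV. w (v $ j))"
      using pointwise[OF True N_def assms(1,2) be e_def, of i] unfolding w_def by blast
    have w0: "0 \<le> w z" for z unfolding w_def by auto
    have "ennreal (\<bar>u $ i\<bar> powr \<alpha> / \<bar>(\<Prod>j\<in>UNIV. u $ j) * (\<Sum>j\<in>UNIV. u $ j)\<bar> powr \<beta>) \<le> ennreal (N * (\<Prod>j\<in>UNIV. w (v $ j)))"
      using le by (rule ennreal_leI)
    also have "\<dots> = ennreal N * P v"
      unfolding P_def using N1 w0 by (simp add: ennreal_mult prod_nonneg prod_ennreal)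
    also have "\<dots> \<le> ennreal N * (P u + (\<Sum>k\<in>UNIV. P (sh k u)))"
    proof (intro mult_left_mono)
      show "P v \<le> P u + (\<Sum>k\<in>UNIV. P (sh k u))"
        using v
      proof
        assume "v = u" then show ?thesis by (simp add: add_increasing2)
      next
        assume "\<exists>k. v = sh k u"
        then obtain k where "v = sh k u" by blast
        then have "P v \<le> (\<Sum>k\<in>UNIV. P (sh k u))" using member_le_sum[of k UNIV "\<lambda>k. P (sh k u)"] by simp
        then show ?thesis by (simp add: add_increasing)
      qed
    qed simp
    finally show ?thesis using True by simp
  qed
  have "(\<integral>\<^sup>+ u. indicator {u :: real ^ 'n. \<forall>j. \<bar>u $ j\<bar> \<le> 1} u *
            ennreal (\<bar>u $ i\<bar> powr \<alpha> /
                     \<bar>(\<Prod>j\<in>UNIV. u $ j) * (\<Sum>j\<in>UNIV. u $ j)\<bar> powr \<beta>) \<partial>lborel)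
     \<le> (\<integral>\<^sup>+ u. ennreal N * (P u + (\<Sum>k\<in>UNIV. P (sh k u))) \<partial>lborel)"
    by (intro nn_integral_mono bound)
  also have "\<dots> = ennreal N * ((\<integral>\<^sup>+u. P u \<partial>lborel) + (\<Sum>k\<in>UNIV. (\<integral>\<^sup>+u. P (sh k u) \<partial>lborel)))"
  proof -
    have m1[measurable]: "(\<lambda>u. P (sh k u)) \<in> borel_measurable borel" for k
      using measurable_comp[OF sh_meas[of k] Pm] by (simp add: comp_def)
    have "(\<integral>\<^sup>+ u. ennreal N * (P u + (\<Sum>k\<in>UNIV. P (sh k u))) \<partial>lborel)
        = ennreal N * (\<integral>\<^sup>+ u. (P u + (\<Sum>k\<in>UNIV. P (sh k u))) \<partial>lborel)"
      by (rule nn_integral_cmult) measurable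
    also have "(\<integral>\<^sup>+ u. (P u + (\<Sum>k\<in>UNIV. P (sh k u))) \<partial>lborel)
        = (\<integral>\<^sup>+u. P u \<partial>lborel) + (\<integral>\<^sup>+u. (\<Sum>k\<in>UNIV. P (sh k u)) \<partial>lborel)"
      by (rule nn_integral_add) measurable
    also have "(\<integral>\<^sup>+u. (\<Sum>k\<in>UNIV. P (sh k u)) \<partial>lborel) = (\<Sum>k\<in>UNIV. (\<integral>\<^sup>+u. P (sh k u) \<partial>lborel))"
      by (rule nn_integral_sum) measurable
    finally show ?thesis .
  qed
  also have "\<dots> = ennreal N * ((\<integral>\<^sup>+u. P u \<partial>lborel) + of_nat CARD('n) * (\<integral>\<^sup>+u. P u \<partial>lborel))"
    by (simp add: IPk)
  also have "\<dots> < \<infinity>"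
    using IP by (simp add: ennreal_mult_less_top ennreal_of_nat_eq_real_of_nat)
  finally show ?thesis .
qed


end
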